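(* Let $M=(S,\mathrm{Act},P)$ be an MDP, $T\subseteq S$, $\mathrm{rew}\colon S\to\mathbb{R}_{\ge0}$. Let $(x,r,\sigma)$ with $x\in[0,\infty]^S$, $r\in\mathbb{N}_\infty^S$, and $\sigma$ a strategy satisfy: (1) $D^{\sigma}(r)\le r$; (2) $E^{\sigma}(x)\le x$; (3) for all $s\in S$, $x(s)<\infty$ implies $r(s)<\infty$ (inequalities pointwise). Then for all $s\in S$: $\mathbb{E}^{\min}_s(\Diamond T)\le\mathbb{E}^{\sigma}_s(\Diamond T)\le x(s)$.
   Context: An MDP is a tuple $M=(S,\mathrm{Act},P)$ with $S$ finite, $\mathrm{Act}$ finite, $P\colon S\times\mathrm{Act}\times S\to[0,1]$ with $\sum_{s'}P(s,a,s')\in\{0,1\}$; $\mathrm{Act}(s)=\{a\mid\sum_{s'}P(s,a,s')=1\}$ is nonempty for all $s$; $\mathrm{Post}(s,a)=\{s'\mid P(s,a,s')>0\}$. A strategy is $\sigma\colon S\to\mathrm{Act}$ with $\sigma(s)\in\mathrm{Act}(s)$, inducing a Markov chain with transitions $P(s,\sigma(s),\cdot)$. For an infinite path $s_0s_1\ldots$, the accumulated reward is $\sum_{k=0}^{n-1}\mathrm{rew}(s_k)$ with $n=\min\{i\mid s_i\in T\}$ if $T$ is visited, and $\infty$ otherwise; $\mathbb{E}^\sigma_s(\Diamond T)$ is its expectation under $\sigma$ from $s$, and $\mathbb{E}^{\min}_s(\Diamond T)=\min_\sigma\mathbb{E}^\sigma_s(\Diamond T)$. $E^{\sigma}(x)(s)=0$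 for $s\in T$ and $\mathrm{rew}(s)+\sum_{s'\in\mathrm{Post}(s,\sigma(s))}P(s,\sigma(s),s')x(s')$ for $s\notin T$, with $p\cdot\infty=\infty$ for $p>0$, $a+\infty=\infty$. $\mathbb{N}_\infty=\mathbb{N}\cup\{\infty\}$, $1+\infty=\infty$; $D^{\sigma}(r)(s)=0$ for $s\in T$ and $1+\min_{s'\in\mathrm{Post}(s,\sigma(s))}r(s')$ for $s\notin T$. *)

theory Defs
  imports "HOL-Analysis.Analysis" "HOL-Library.Extended_Nat" "HOL-Library.Extended_Nonnegative_Real"
begin

definition Act :: "('s::finite \<Rightarrow> 'a \<Rightarrow> 's \<Rightarrow> real) \<Rightarrow> 's \<Rightarrow> 'a set" where
  "Act P s = {a. (\<Sum>s'\<in>UNIV. P s a s') = 1}"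

definition Post :: "('s::finite \<Rightarrow> 'a \<Rightarrow> 's \<Rightarrow> real) \<Rightarrow> 's \<Rightarrow> 'a \<Rightarrow> 's set" where
  "Post P s a = {s'. P s a s' > 0}"

definition is_MDP :: "('s::finite \<Rightarrow> 'a::finite \<Rightarrow> 's \<Rightarrow> real) \<Rightarrow> bool" where
  "is_MDP P \<longleftrightarrow> (\<forall>s a s'. 0 \<le> P s a s' \<and> P s a s' \<le> 1)
     \<and> (\<forall>s a. (\<Sum>s'\<in>UNIV. P s a s') \<in> {0, 1})
     \<and> (\<forall>s. Act P s \<noteq> {})"

definition is_strategy :: "('s::finite \<Rightarrow> 'a \<Rightarrow> 's \<Rightarrow> real) \<Rightarrow> ('s \<Rightarrow> 'a) \<Rightarrow> bool" where
  "is_strategy P \<sigma> \<longleftrightarrow> (\<forall>s. \<sigma> s \<in> Act P s)"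

definition E_op :: "('s::finite \<Rightarrow> 'a \<Rightarrow> 's \<Rightarrow> real) \<Rightarrow> 's set \<Rightarrow> ('s \<Rightarrow> real) \<Rightarrow> ('s \<Rightarrow> 'a)
    \<Rightarrow> ('s \<Rightarrow> ennreal) \<Rightarrow> 's \<Rightarrow> ennreal" where
  "E_op P T rew \<sigma> x s = (if s \<in> T then 0
     else ennreal (rew s) + (\<Sum>s'\<in>Post P s (\<sigma> s). ennreal (P s (\<sigma> s) s') * x s'))"

definition D_op :: "('s::finite \<Rightarrow> 'a \<Rightarrow> 's \<Rightarrow> real) \<Rightarrow> 's set \<Rightarrow> ('s \<Rightarrow> 'a)
    \<Rightarrow> ('s \<Rightarrow> enat) \<Rightarrow> 's \<Rightarrow> enat" where
  "D_op P T \<sigma> r s = (if s \<in> T then 0 else 1 + Min (r ` Post P s (\<sigma> s)))"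

fun path_prob :: "('s \<Rightarrow> 'a \<Rightarrow> 's \<Rightarrow> real) \<Rightarrow> ('s \<Rightarrow> 'a) \<Rightarrow> 's \<Rightarrow> 's list \<Rightarrow> real" where
  "path_prob P \<sigma> s [] = 1"
| "path_prob P \<sigma> s (t # ts) = P s (\<sigma> s) t * path_prob P \<sigma> t ts"

text \<open>Continuations xs = t1...tn such that s t1 ... tn visits T for the first time at tn
  (for s not in T).\<close>
definition first_hit :: "'s set \<Rightarrow> 's list set" where
  "first_hit T = {xs. xs \<noteq> [] \<and> last xs \<in> T \<and> (\<forall>y\<in>set (butlast xs). y \<notin> T)}"

definition path_rew :: "('s \<Rightarrow> real) \<Rightarrow> 's \<Rightarrow> 's list \<Rightarrow> real" where
  "path_rew rew s xs = rew s + sum_list (map rew (butlast xs))"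

text \<open>Probability of eventually reaching T from s under sigma (s not in T): sum over the
  disjoint cylinder sets of first-hitting prefixes.\<close>
definition reach_prob :: "('s \<Rightarrow> 'a \<Rightarrow> 's \<Rightarrow> real) \<Rightarrow> 's set \<Rightarrow> ('s \<Rightarrow> 'a) \<Rightarrow> 's \<Rightarrow> ennreal" where
  "reach_prob P T \<sigma> s = (\<integral>\<^sup>+ xs. ennreal (path_prob P \<sigma> s xs) \<partial>count_space (first_hit T))"

text \<open>Expected accumulated reward E^sigma_s(<> T): the accumulated reward is a random
  variable on infinite paths that is constant on each first-hitting cylinder and equals
  \<infinity> on paths never visiting T; hence its expectation is the sum over the first-hitting
  prefixes plus \<infinity> * Pr(never reach T).\<close>
definition exp_rew :: "('s \<Rightarrow> 'a \<Rightarrow> 's \<Rightarrow> real) \<Rightarrow> 's set \<Rightarrow> ('s \<Rightarrow> real) \<Rightarrow> ('s \<Rightarrow> 'a)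
    \<Rightarrow> 's \<Rightarrow> ennreal" where
  "exp_rew P T rew \<sigma> s =
     (if s \<in> T then 0
      else if reach_prob P T \<sigma> s < 1 then \<infinity>
      else (\<integral>\<^sup>+ xs. ennreal (path_prob P \<sigma> s xs) * ennreal (path_rew rew s xs)
              \<partial>count_space (first_hit T)))"

definition exp_rew_min :: "('s::finite \<Rightarrow> 'a::finite \<Rightarrow> 's \<Rightarrow> real) \<Rightarrow> 's set \<Rightarrow> ('s \<Rightarrow> real)
    \<Rightarrow> 's \<Rightarrow> ennreal" where
  "exp_rew_min P T rew s = Min {exp_rew P T rew \<sigma> s | \<sigma>. is_strategy P \<sigma>}"

end

theory Submission
  imports Defs
begin

definition fhn :: "'s set \<Rightarrow> nat \<Rightarrow> 's list set" where
  "fhn T n = {xs \<in> first_hit T. length xs \<le> n}"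

lemma fhn_finite: "finite (fhn (T::'s::finite set) n)"
proof -
  have "fhn T n \<subseteq> {xs. set xs \<subseteq> UNIV \<and> length xs \<le> n}" by (auto simp: fhn_def)
  then show ?thesis using finite_lists_length_le[of "UNIV::'s set" n] finite_subset by auto
qed

lemma fhn_0: "fhn T 0 = {}" by (auto simp: fhn_def first_hit_def)

lemma fhn_Suc: "fhn T (Suc n) = (\<lambda>t. [t]) ` T \<union> (\<lambda>(t,ts). t#ts) ` (Sigma (-T) (\<lambda>_. fhn T n))"
proof (intro set_eqI iffI)
  fix xs assume "xs \<in> fhn T (Suc n)"
  then obtain t ts where xs: "xs = t # ts" and h: "last xs \<in> T" "\<forall>y\<in>set (butlast xs). y \<notin> T" "length ts \<le> n"
    by (cases xs) (auto simp: fhn_def first_hit_def)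
  show "xs \<in> (\<lambda>t. [t]) ` T \<union> (\<lambda>(t,ts). t#ts) ` (Sigma (-T) (\<lambda>_. fhn T n))"
  proof (cases "ts = []")
    case True then show ?thesis using xs h by auto
  next
    case False
    then have "t \<notin> T" "ts \<in> fhn T n" using xs h by (auto simp: fhn_def first_hit_def)
    then show ?thesis using xs by (auto intro!: image_eqI[where x="(t,ts)"])
  qed
next
  fix xs assume "xs \<in> (\<lambda>t. [t]) ` T \<union> (\<lambda>(t,ts). t#ts) ` (Sigma (-T) (\<lambda>_. fhn T n))"
  then show "xs \<in> fhn T (Suc n)"
    by (auto simp: fhn_def first_hit_def)
qed

lemma sum_fhn_Suc:
  fixes g :: "'s::finite list \<Rightarrow> 'b::comm_monoid_add"
  shows "(\<Sum>xs\<in>fhn T (Suc n). g xs) = (\<Sum>t\<in>T. g [t]) + (\<Sum>t\<in>-T. \<Sum>ts\<in>fhn T n. g (t#ts))"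
proof -
  have d: "(\<lambda>t. [t]) ` T \<inter> (\<lambda>(t,ts). t#ts) ` (Sigma (-T) (\<lambda>_. fhn T n)) = {}"
    by (auto simp: fhn_def first_hit_def)
  have "(\<Sum>xs\<in>fhn T (Suc n). g xs) = sum g ((\<lambda>t. [t]) ` T) + sum g ((\<lambda>(t,ts). t#ts) ` (Sigma (-T) (\<lambda>_. fhn T n)))"
    unfolding fhn_Suc by (rule sum.union_disjoint) (auto simp: fhn_finite d)
  also have "sum g ((\<lambda>t. [t]) ` T) = (\<Sum>t\<in>T. g [t])"
    by (subst sum.reindex) (auto simp: inj_on_def)
  also have "sum g ((\<lambda>(t,ts). t#ts) ` (Sigma (-T) (\<lambda>_. fhn T n))) = (\<Sum>(t,ts)\<in>Sigma (-T) (\<lambda>_. fhn T n). g (t#ts))"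
    by (subst sum.reindex) (auto simp: inj_on_def intro!: sum.cong)
  also have "\<dots> = (\<Sum>t\<in>-T. \<Sum>ts\<in>fhn T n. g (t#ts))"
    by (rule sum.Sigma[symmetric]) (auto simp: fhn_finite)
  finally show ?thesis .
qed

lemma nn_count_SUP:
  fixes f :: "'s::finite list \<Rightarrow> ennreal"
  shows "(\<integral>\<^sup>+xs. f xs \<partial>count_space (first_hit T)) = (SUP n. \<Sum>xs\<in>fhn T n. f xs)"
proof -
  have 1: "f xs = (SUP n. f xs * indicator {xs. length xs \<le> n} xs)" for xs
  proof (rule antisym)
    show "f xs \<le> (SUP n. f xs * indicator {xs. length xs \<le> n} xs)"
      by (rule SUP_upper2[where i="length xs"]) auto
    show "(SUP n. f xs * indicator {xs. length xs \<le> n} xs) \<le> f xs"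
      by (rule SUP_least) (auto simp: indicator_def)
  qed
  have "(\<integral>\<^sup>+xs. f xs \<partial>count_space (first_hit T)) =
        (\<integral>\<^sup>+xs. (SUP n. f xs * indicator {xs. length xs \<le> n} xs) \<partial>count_space (first_hit T))"
    using 1 by simp
  also have "\<dots> = (SUP n. \<integral>\<^sup>+xs. f xs * indicator {xs. length xs \<le> n} xs \<partial>count_space (first_hit T))"
    by (rule nn_integral_monotone_convergence_SUP) (auto simp: incseq_def le_fun_def indicator_def)
  also have "\<dots> = (SUP n. \<Sum>xs\<in>fhn T n. f xs)"
  proof (rule SUP_cong[OF refl])
    fix n
    show "(\<integral>\<^sup>+xs. f xs * indicator {xs. length xs \<le> n} xs \<partial>count_space (first_hit T)) = (\<Sum>xs\<in>fhn T n. f xs)"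
      by (subst nn_integral_count_space'[where A="fhn T n"]) (use fhn_finite[of T n] in \<open>auto simp: fhn_def intro!: sum.cong\<close>)
  qed
  finally show ?thesis .
qed


definition Rn :: "('s::finite \<Rightarrow> 'a \<Rightarrow> 's \<Rightarrow> real) \<Rightarrow> 's set \<Rightarrow> ('s \<Rightarrow> 'a) \<Rightarrow> nat \<Rightarrow> 's \<Rightarrow> real" where
  "Rn P T \<sigma> n s = (\<Sum>xs\<in>fhn T n. path_prob P \<sigma> s xs)"

definition Wn :: "('s::finite \<Rightarrow> 'a \<Rightarrow> 's \<Rightarrow> real) \<Rightarrow> 's set \<Rightarrow> ('s \<Rightarrow> real) \<Rightarrow> ('s \<Rightarrow> 'a) \<Rightarrow> nat \<Rightarrow> 's \<Rightarrow> real" where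
  "Wn P T rew \<sigma> n s = (\<Sum>xs\<in>fhn T n. path_prob P \<sigma> s xs * path_rew rew s xs)"

lemma sum_split_T: "(\<Sum>t\<in>T. f t) + (\<Sum>t\<in>-T. f t) = (\<Sum>t\<in>UNIV. (f t :: 'b::comm_monoid_add))" for T :: "'s::finite set"
  using sum.union_disjoint[of T "-T" f] by (simp add: Compl_partition)

context
  fixes P :: "'s::finite \<Rightarrow> 'a::finite \<Rightarrow> 's \<Rightarrow> real"
    and T :: "'s set" and rew :: "'s \<Rightarrow> real" and \<sigma> :: "'s \<Rightarrow> 'a"
  assumes mdp: "is_MDP P" and rew0: "\<And>s. rew s \<ge> 0" and strat: "is_strategy P \<sigma>"
begin

lemma P_nonneg: "P s a t \<ge> 0" using mdp by (auto simp: is_MDP_def)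

lemma P_sum: "(\<Sum>t\<in>UNIV. P s (\<sigma> s) t) = 1"
  using strat by (auto simp: is_strategy_def Act_def)

lemma path_prob_nonneg: "path_prob P \<sigma> s xs \<ge> 0"
  by (induction xs arbitrary: s) (auto intro!: mult_nonneg_nonneg P_nonneg)

lemma path_rew_nonneg: "path_rew rew s xs \<ge> 0"
  unfolding path_rew_def using rew0 by (auto intro!: add_nonneg_nonneg sum_list_nonneg)

lemma Rn_0: "Rn P T \<sigma> 0 s = 0" by (simp add: Rn_def fhn_0)

lemma Rn_Suc: "Rn P T \<sigma> (Suc n) s = (\<Sum>t\<in>T. P s (\<sigma> s) t) + (\<Sum>t\<in>-T. P s (\<sigma> s) t * Rn P T \<sigma> n t)"
  unfolding Rn_def sum_fhn_Suc by (simp add: sum_distrib_left)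

lemma Rn_nonneg: "Rn P T \<sigma> n s \<ge> 0"
  unfolding Rn_def by (auto intro!: sum_nonneg path_prob_nonneg)

lemma Rn_le1: "Rn P T \<sigma> n s \<le> 1"
proof (induction n arbitrary: s)
  case 0 then show ?case by (simp add: Rn_0)
next
  case (Suc n)
  have "Rn P T \<sigma> (Suc n) s \<le> (\<Sum>t\<in>T. P s (\<sigma> s) t) + (\<Sum>t\<in>-T. P s (\<sigma> s) t)"
    unfolding Rn_Suc using Suc P_nonneg by (auto intro!: sum_mono mult_left_le)
  also have "\<dots> = 1" using sum_split_T P_sum by metis
  finally show ?case .
qed

lemma Rn_mono: "Rn P T \<sigma> n s \<le> Rn P T \<sigma> (Suc n) s"
  unfolding Rn_def by (rule sum_mono2[OF fhn_finite]) (auto simp: fhn_def path_prob_nonneg)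

lemma Wn_0: "Wn P T rew \<sigma> 0 s = 0" by (simp add: Wn_def fhn_0)

lemma Wn_Suc: "Wn P T rew \<sigma> (Suc n) s = rew s * Rn P T \<sigma> (Suc n) s + (\<Sum>t\<in>-T. P s (\<sigma> s) t * Wn P T rew \<sigma> n t)"
proof -
  have pr: "path_rew rew s (t # ts) = rew s + path_rew rew t ts" if "ts \<in> fhn T n" for t ts
    using that by (cases ts) (auto simp: path_rew_def fhn_def first_hit_def)
  have prs: "path_rew rew s [t] = rew s" for t by (simp add: path_rew_def)
  have "Wn P T rew \<sigma> (Suc n) s = (\<Sum>t\<in>T. P s (\<sigma> s) t * rew s) +
     (\<Sum>t\<in>-T. \<Sum>ts\<in>fhn T n. P s (\<sigma> s) t * path_prob P \<sigma> t ts * (rew s + path_rew rew t ts))"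
    unfolding Wn_def sum_fhn_Suc by (auto intro!: sum.cong simp: pr prs)
  also have "\<dots> = rew s * Rn P T \<sigma> (Suc n) s + (\<Sum>t\<in>-T. P s (\<sigma> s) t * Wn P T rew \<sigma> n t)"
    unfolding Rn_Suc Wn_def Rn_def[of P T \<sigma> n]
    by (simp add: algebra_simps sum_distrib_left sum_distrib_right sum.distrib)
  finally show ?thesis .
qed


lemma Wn_nonneg: "Wn P T rew \<sigma> n s \<ge> 0"
  unfolding Wn_def by (auto intro!: sum_nonneg mult_nonneg_nonneg path_prob_nonneg path_rew_nonneg)

lemma sum_Post_le:
  fixes g :: "'s \<Rightarrow> ennreal"
  shows "(\<Sum>t\<in>-T. ennreal (P s (\<sigma> s) t) * g t) \<le> (\<Sum>t\<in>Post P s (\<sigma> s). ennreal (P s (\<sigma> s) t) * g t)"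
proof -
  have "(\<Sum>t\<in>-T. ennreal (P s (\<sigma> s) t) * g t) = (\<Sum>t\<in>-T \<inter> Post P s (\<sigma> s). ennreal (P s (\<sigma> s) t) * g t)"
  proof (rule sum.mono_neutral_right)
    show "\<forall>i\<in>- T - - T \<inter> Post P s (\<sigma> s). ennreal (P s (\<sigma> s) i) * g i = 0"
      using P_nonneg by (auto simp: Post_def) (metis antisym_conv1 ennreal_0 mult_zero_left)
  qed auto
  also have "\<dots> \<le> (\<Sum>t\<in>Post P s (\<sigma> s). ennreal (P s (\<sigma> s) t) * g t)"
    by (rule sum_mono2) auto
  finally show ?thesis .
qed

lemma Wn_le_x:
  assumes E: "\<And>s. E_op P T rew \<sigma> x s \<le> x s"
  shows "s \<notin> T \<Longrightarrow> ennreal (Wn P T rew \<sigma> n s) \<le> x s"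
proof (induction n arbitrary: s)
  case 0 then show ?case by (simp add: Wn_0)
next
  case (Suc n)
  have "Wn P T rew \<sigma> (Suc n) s \<le> rew s + (\<Sum>t\<in>-T. P s (\<sigma> s) t * Wn P T rew \<sigma> n t)"
    unfolding Wn_Suc using Rn_le1 rew0 by (simp add: mult_left_le)
  then have "ennreal (Wn P T rew \<sigma> (Suc n) s) \<le> ennreal (rew s + (\<Sum>t\<in>-T. P s (\<sigma> s) t * Wn P T rew \<sigma> n t))"
    by (rule ennreal_leI)
  also have "\<dots> = ennreal (rew s) + (\<Sum>t\<in>-T. ennreal (P s (\<sigma> s) t) * ennreal (Wn P T rew \<sigma> n t))"
  proof -
    have "ennreal (rew s + (\<Sum>t\<in>-T. P s (\<sigma> s) t * Wn P T rew \<sigma> n t)) = ennreal (rew s) + ennreal (\<Sum>t\<in>-T. P s (\<sigma> s) t * Wn P T rew \<sigma> n t)"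
      by (rule ennreal_plus) (auto intro!: rew0 sum_nonneg mult_nonneg_nonneg P_nonneg Wn_nonneg)
    also have "ennreal (\<Sum>t\<in>-T. P s (\<sigma> s) t * Wn P T rew \<sigma> n t) = (\<Sum>t\<in>-T. ennreal (P s (\<sigma> s) t * Wn P T rew \<sigma> n t))"
      by (rule sum_ennreal[symmetric]) (auto intro!: mult_nonneg_nonneg P_nonneg Wn_nonneg)
    also have "\<dots> = (\<Sum>t\<in>-T. ennreal (P s (\<sigma> s) t) * ennreal (Wn P T rew \<sigma> n t))"
      by (rule sum.cong[OF refl], rule ennreal_mult) (auto intro!: P_nonneg Wn_nonneg)
    finally show ?thesis .
  qed
  also have "\<dots> \<le> ennreal (rew s) + (\<Sum>t\<in>-T. ennreal (P s (\<sigma> s) t) * x t)"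
    by (intro add_left_mono sum_mono mult_left_mono) (auto intro: Suc.IH)
  also have "\<dots> \<le> ennreal (rew s) + (\<Sum>t\<in>Post P s (\<sigma> s). ennreal (P s (\<sigma> s) t) * x t)"
    using sum_Post_le by (rule add_left_mono)
  also have "\<dots> = E_op P T rew \<sigma> x s" using Suc.prems by (simp add: E_op_def)
  also have "\<dots> \<le> x s" by (rule E)
  finally show ?case .
qed

definition q :: "'s \<Rightarrow> real" where "q s = (SUP n. Rn P T \<sigma> n s)"

lemma Rn_lim: "(\<lambda>n. Rn P T \<sigma> n s) \<longlonglongrightarrow> q s"
  unfolding q_def
  by (rule LIMSEQ_incseq_SUP) (auto intro!: bdd_aboveI2[where M=1] incseq_SucI Rn_mono Rn_le1)

lemma q_le1: "q s \<le> 1"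
  unfolding q_def by (rule cSUP_least) (auto simp: Rn_le1)

lemma q_fix: "q s = (\<Sum>t\<in>T. P s (\<sigma> s) t) + (\<Sum>t\<in>-T. P s (\<sigma> s) t * q t)"
proof (rule LIMSEQ_unique)
  show "(\<lambda>n. Rn P T \<sigma> (Suc n) s) \<longlonglongrightarrow> q s" using Rn_lim by (rule LIMSEQ_Suc)
  show "(\<lambda>n. Rn P T \<sigma> (Suc n) s) \<longlonglongrightarrow> (\<Sum>t\<in>T. P s (\<sigma> s) t) + (\<Sum>t\<in>-T. P s (\<sigma> s) t * q t)"
    unfolding Rn_Suc by (intro tendsto_intros Rn_lim)
qed


lemma q_one:
  fixes x :: "'s \<Rightarrow> ennreal" and r :: "'s \<Rightarrow> enat"
  assumes D: "\<And>s. D_op P T \<sigma> r s \<le> r s"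
    and E: "\<And>s. E_op P T rew \<sigma> x s \<le> x s"
    and fin: "\<And>s. x s < \<infinity> \<Longrightarrow> r s < \<infinity>"
    and s: "s \<notin> T" "x s < \<infinity>"
  shows "q s = 1"
proof (rule ccontr)
  assume "q s \<noteq> 1"
  then have qs: "q s < 1" using q_le1[of s] by auto
  define X where "X = {s. s \<notin> T \<and> x s < \<infinity>}"
  have closure: "t \<in> X" if "s' \<in> X" "P s' (\<sigma> s') t > 0" "t \<notin> T" for s' t
  proof -
    have "ennreal (P s' (\<sigma> s') t) * x t \<le> (\<Sum>t\<in>Post P s' (\<sigma> s'). ennreal (P s' (\<sigma> s') t) * x t)"
      by (rule member_le_sum) (use that in \<open>auto simp: Post_def\<close>)
    also have "\<dots> \<le> E_op P T rew \<sigma> x s'" using that by (simp add: E_op_def X_def)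
    also have "\<dots> \<le> x s'" by (rule E)
    also have "\<dots> < \<infinity>" using that by (simp add: X_def)
    finally have "ennreal (P s' (\<sigma> s') t) * x t < \<infinity>" .
    then have "x t < \<infinity>" using that(2)
      by (auto simp: ennreal_mult_less_top top.not_eq_extremum)
    then show ?thesis using that by (simp add: X_def)
  qed
  have sX: "s \<in> X" using s by (simp add: X_def)
  have finX: "finite X" by simp
  define m where "m = Min (q ` X)"
  have m_le: "m \<le> q t" if "t \<in> X" for t using that finX by (simp add: m_def)
  have "m \<in> q ` X" unfolding m_def using finX sX by (intro Min_in) auto
  then have "m < 1" using qs m_le[OF sX] by auto
  define Y where "Y = {t \<in> X. q t = m}"
  have Yne: "Y \<noteq> {}" using \<open>m \<in> q ` X\<close> by (auto simp: Y_def)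
  have "Min (r ` Y) \<in> r ` Y" using Yne by (intro Min_in) auto
  then obtain s0 where s0: "s0 \<in> Y" "r s0 = Min (r ` Y)" by auto
  have s0min: "r s0 \<le> r y" if "y \<in> Y" for y using that s0 by simp
  have s0X: "s0 \<in> X" and qs0: "q s0 = m" using s0 by (auto simp: Y_def)
  have rs0: "r s0 < \<infinity>" using s0X fin by (simp add: X_def)
  have Pne: "Post P s0 (\<sigma> s0) \<noteq> {}"
  proof
    assume "Post P s0 (\<sigma> s0) = {}"
    then have "\<forall>t. P s0 (\<sigma> s0) t \<le> 0" by (auto simp: Post_def not_less)
    then have "\<forall>t. P s0 (\<sigma> s0) t = 0" using P_nonneg by (meson antisym)
    then show False using P_sum[of s0] by simp
  qed
  have "Min (r ` Post P s0 (\<sigma> s0)) \<in> r ` Post P s0 (\<sigma> s0)" using Pne by (intro Min_in) auto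
  then obtain t0 where t0: "t0 \<in> Post P s0 (\<sigma> s0)" "r t0 = Min (r ` Post P s0 (\<sigma> s0))" by auto
  have "1 + r t0 \<le> r s0" using D[of s0] s0X t0 by (simp add: D_op_def X_def)
  then have rt0: "r t0 < r s0" using rs0
    by (cases "r t0"; cases "r s0") (auto simp: one_enat_def)
  have Pt0: "P s0 (\<sigma> s0) t0 > 0" using t0 by (simp add: Post_def)
  define v where "v t = (if t \<in> T then 1 else q t)" for t
  have qsum: "q s0 = (\<Sum>t\<in>UNIV. P s0 (\<sigma> s0) t * v t)"
  proof -
    have "q s0 = (\<Sum>t\<in>T. P s0 (\<sigma> s0) t * v t) + (\<Sum>t\<in>-T. P s0 (\<sigma> s0) t * v t)"
      by (subst q_fix) (auto simp: v_def intro!: sum.cong arg_cong2[where f="(+)"])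
    then show ?thesis using sum_split_T by metis
  qed
  have ge: "P s0 (\<sigma> s0) t * m \<le> P s0 (\<sigma> s0) t * v t" for t
  proof (cases "P s0 (\<sigma> s0) t > 0")
    case True
    have "m \<le> v t"
    proof (cases "t \<in> T")
      case True then show ?thesis using \<open>m < 1\<close> by (simp add: v_def)
    next
      case False
      then have "t \<in> X" using closure[OF s0X \<open>P s0 (\<sigma> s0) t > 0\<close>] by simp
      then show ?thesis using m_le False by (simp add: v_def)
    qed
    then show ?thesis using True by (simp add: mult_left_mono)
  next
    case False
    then have "P s0 (\<sigma> s0) t = 0" using P_nonneg by (meson antisym not_less)
    then show ?thesis by simp
  qed
  have gt: "m < v t0"
  proof (cases "t0 \<in> T")
    case True then show ?thesis using \<open>m < 1\<close> by (simp add: v_def)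
  next
    case False
    then have t0X: "t0 \<in> X" using closure[OF s0X Pt0] by simp
    have "q t0 \<noteq> m"
    proof
      assume "q t0 = m"
      then have "t0 \<in> Y" using t0X by (simp add: Y_def)
      then show False using s0min rt0 by fastforce
    qed
    then show ?thesis using m_le[OF t0X] False by (simp add: v_def)
  qed
  have "(\<Sum>t\<in>UNIV. P s0 (\<sigma> s0) t * m) < (\<Sum>t\<in>UNIV. P s0 (\<sigma> s0) t * v t)"
    using ge gt Pt0 by (intro sum_strict_mono_ex1) (auto intro!: exI[where x=t0])
  moreover have "(\<Sum>t\<in>UNIV. P s0 (\<sigma> s0) t * m) = m"
    using P_sum[of s0] by (simp add: sum_distrib_right[symmetric])
  ultimately show False using qsum qs0 by linarith
qed

end

theorem proposition10:
  fixes P :: "'s::finite \<Rightarrow> 'a::finite \<Rightarrow> 's \<Rightarrow> real"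
    and T :: "'s set" and rew :: "'s \<Rightarrow> real"
    and x :: "'s \<Rightarrow> ennreal" and r :: "'s \<Rightarrow> enat" and \<sigma> :: "'s \<Rightarrow> 'a"
  assumes "is_MDP P"
    and "\<And>s. rew s \<ge> 0"
    and "is_strategy P \<sigma>"
    and "\<And>s. D_op P T \<sigma> r s \<le> r s"
    and "\<And>s. E_op P T rew \<sigma> x s \<le> x s"
    and "\<And>s. x s < \<infinity> \<Longrightarrow> r s < \<infinity>"
  shows "\<forall>s. exp_rew_min P T rew s \<le> exp_rew P T rew \<sigma> s \<and> exp_rew P T rew \<sigma> s \<le> x s"
proof
  fix s
  have fin: "finite {exp_rew P T rew \<sigma>' s | \<sigma>'. is_strategy P \<sigma>'}"
  proof -
    have "{exp_rew P T rew \<sigma>' s | \<sigma>'. is_strategy P \<sigma>'} \<subseteq> (\<lambda>\<sigma>'. exp_rew P T rew \<sigma>' s) ` UNIV" by auto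
    then show ?thesis by (rule finite_subset) simp
  qed
  have part1: "exp_rew_min P T rew s \<le> exp_rew P T rew \<sigma> s"
    unfolding exp_rew_min_def by (rule Min_le[OF fin]) (use assms(3) in auto)
  have part2: "exp_rew P T rew \<sigma> s \<le> x s"
  proof (cases "s \<in> T \<or> x s = \<infinity>")
    case True then show ?thesis by (auto simp: exp_rew_def)
  next
    case False
    then have sT: "s \<notin> T" and xs: "x s < \<infinity>" by (auto simp: top.not_eq_extremum)
    have q1: "q P T \<sigma> s = 1" using q_one[OF assms(1,2,3,4,5,6) sT xs] .
    have reach: "reach_prob P T \<sigma> s = (SUP n. ennreal (Rn P T \<sigma> n s))"
      unfolding reach_prob_def nn_count_SUP Rn_def
      by (rule SUP_cong[OF refl], rule sum_ennreal) (auto intro: path_prob_nonneg[OF assms(1,2,3)])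
    have "(\<lambda>n. ennreal (Rn P T \<sigma> n s)) \<longlonglongrightarrow> ennreal (q P T \<sigma> s)"
      by (intro tendsto_ennrealI Rn_lim[OF assms(1,2,3)])
    moreover have "(\<lambda>n. ennreal (Rn P T \<sigma> n s)) \<longlonglongrightarrow> (SUP n. ennreal (Rn P T \<sigma> n s))"
      by (rule LIMSEQ_SUP) (auto intro!: incseq_SucI ennreal_leI Rn_mono[OF assms(1,2,3)])
    ultimately have "reach_prob P T \<sigma> s = 1" using reach q1 LIMSEQ_unique by fastforce
    then have "exp_rew P T rew \<sigma> s = (\<integral>\<^sup>+ xs. ennreal (path_prob P \<sigma> s xs) * ennreal (path_rew rew s xs)
              \<partial>count_space (first_hit T))" using sT by (simp add: exp_rew_def)
    also have "\<dots> = (SUP n. ennreal (Wn P T rew \<sigma> n s))"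
      unfolding nn_count_SUP Wn_def
    proof (rule SUP_cong[OF refl])
      fix n
      show "(\<Sum>xs\<in>fhn T n. ennreal (path_prob P \<sigma> s xs) * ennreal (path_rew rew s xs)) =
          ennreal (\<Sum>xs\<in>fhn T n. path_prob P \<sigma> s xs * path_rew rew s xs)"
        by (subst sum_ennreal[symmetric])
          (auto intro!: sum.cong ennreal_mult[symmetric] mult_nonneg_nonneg
             path_prob_nonneg[OF assms(1,2,3)] path_rew_nonneg[OF assms(1,2,3)])
    qed
    also have "\<dots> \<le> x s"
      by (rule SUP_least) (rule Wn_le_x[OF assms(1,2,3) assms(5) sT])
    finally show ?thesis .
  qed
  show "exp_rew_min P T rew s \<le> exp_rew P T rew \<sigma> s \<and> exp_rew P T rew \<sigma> s \<le> x s"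
    using part1 part2 by simp
qed

end
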